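(* $\chi_D(LG_3)\le 5$.
   Context: Let $V=\mathbb{F}_3^3$; $LG_3$ is the bipartite graph whose vertices are the $1$-dimensional subspaces ("points") and the $2$-dimensional subspaces ("lines") of $V$, a point being adjacent to a line iff it is contained in it. A coloring is distinguishing if the only graph automorphism mapping every color class onto itself is the identity; $\chi_D(G)$ is the minimum number of colors of a proper distinguishing coloring of $G$. *)

theory Defs
  imports "HOL-Analysis.Cartesian_Space" "Berlekamp_Zassenhaus.Finite_Field"
begin

datatype three = T0 | T1 | T2

lemma UNIV_three: "(UNIV :: three set) = {T0, T1, T2}"
  using three.exhaust by blast

instance three :: finite
  by standard (simp add: UNIV_three)

lemma card_three: "CARD(three) = 3"
  by (simp add: UNIV_three)

instance three :: prime_card
  by standard (simp add: card_three)

type_synonym F3 = "three mod_ring"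

type_synonym V3 = "F3 ^ 3"

definition graph_automorphism :: "'v set \<Rightarrow> ('v \<Rightarrow> 'v \<Rightarrow> bool) \<Rightarrow> ('v \<Rightarrow> 'v) \<Rightarrow> bool" where
  "graph_automorphism Vs E \<sigma> \<longleftrightarrow>
     bij_betw \<sigma> Vs Vs \<and> (\<forall>u\<in>Vs. \<forall>v\<in>Vs. E u v \<longleftrightarrow> E (\<sigma> u) (\<sigma> v))"

definition proper_coloring :: "'v set \<Rightarrow> ('v \<Rightarrow> 'v \<Rightarrow> bool) \<Rightarrow> ('v \<Rightarrow> nat) \<Rightarrow> bool" where
  "proper_coloring Vs E c \<longleftrightarrow> (\<forall>u\<in>Vs. \<forall>v\<in>Vs. E u v \<longrightarrow> c u \<noteq> c v)"

definition distinguishing_coloring :: "'v set \<Rightarrow> ('v \<Rightarrow> 'v \<Rightarrow> bool) \<Rightarrow> ('v \<Rightarrow> nat) \<Rightarrow> bool" where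
  "distinguishing_coloring Vs E c \<longleftrightarrow>
     (\<forall>\<sigma>. graph_automorphism Vs E \<sigma> \<and> (\<forall>v\<in>Vs. c (\<sigma> v) = c v) \<longrightarrow> (\<forall>v\<in>Vs. \<sigma> v = v))"

definition distinguishing_chromatic_number :: "'v set \<Rightarrow> ('v \<Rightarrow> 'v \<Rightarrow> bool) \<Rightarrow> nat" where
  "distinguishing_chromatic_number Vs E =
     (LEAST k. \<exists>c. c ` Vs \<subseteq> {..<k} \<and> proper_coloring Vs E c \<and> distinguishing_coloring Vs E c)"

definition LG3_points :: "V3 set set" where
  "LG3_points = {W. vec.subspace W \<and> vec.dim W = 1}"

definition LG3_lines :: "V3 set set" where
  "LG3_lines = {W. vec.subspace W \<and> vec.dim W = 2}"

definition LG3_vertices :: "V3 set set" where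
  "LG3_vertices = LG3_points \<union> LG3_lines"

definition LG3_adj :: "V3 set \<Rightarrow> V3 set \<Rightarrow> bool" where
  "LG3_adj X Y \<longleftrightarrow>
     (X \<in> LG3_points \<and> Y \<in> LG3_lines \<and> X \<subseteq> Y) \<or>
     (X \<in> LG3_lines \<and> Y \<in> LG3_points \<and> Y \<subseteq> X)"

end

theory Submission
  imports Defs
begin

lemma three0: "(3::F3) = 0"
proof -
  have "(of_nat CARD(three) :: F3) = 0" by (rule of_nat_card_eq_0)
  thus ?thesis by (simp add: card_three)
qed
lemma two_ne0: "(2::F3) \<noteq> 0"
proof
  assume h: "(2::F3) = 0"
  have "(3::F3) = 2 + 1" by simp
  hence "(0::F3) = 1" using h three0 by simp
  thus False by simp
qed
lemma two_ne1: "(2::F3) \<noteq> 1"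
proof
  assume h: "(2::F3) = 1"
  have "(3::F3) = 2 + 1" by simp
  hence "(0::F3) = 2" using h three0 by simp
  thus False using two_ne0 by simp
qed
lemma UNIV_F3: "(UNIV::F3 set) = {0,1,2}"
proof -
  have "card {0,1,2::F3} = 3" using two_ne0 two_ne1 by simp
  moreover have "card (UNIV::F3 set) = 3" by (simp add: card_three)
  ultimately have "{0,1,2::F3} = UNIV" by (intro card_subset_eq) auto
  thus ?thesis by simp
qed
lemma F3_nums: "(4::F3) = 1" "(5::F3) = 2" "(6::F3) = 0" "(7::F3) = 1" "(8::F3) = 2"
proof -
  have a: "(4::F3) = 3 + 1" "(5::F3) = 3 + 2" "(6::F3) = 3 + 3" "(7::F3) = 3+3+1" "(8::F3) = 3+3+2"
    by simp_all
  show "(4::F3) = 1" "(5::F3) = 2" "(6::F3) = 0" "(7::F3) = 1" "(8::F3) = 2"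
    using a by (simp_all add: three0)
qed
lemma F3_neq[simp]: "(2::F3) \<noteq> 0" "(0::F3) \<noteq> 2" "(2::F3) \<noteq> 1" "(1::F3) \<noteq> 2"
  using two_ne0 two_ne1 by (auto dest: sym)

lemma F3_22: "(2::F3) * 2 = 1" by (simp add: F3_nums)

lemmas F3_simps = three0 F3_nums

definition v3 :: "F3 \<Rightarrow> F3 \<Rightarrow> F3 \<Rightarrow> V3" where
  "v3 a b c = (\<chi> i. if i = 1 then a else if i = 2 then b else c)"

lemma v3_nth[simp]: "v3 a b c $ 1 = a" "v3 a b c $ 2 = b" "v3 a b c $ 3 = c"
  by (simp_all add: v3_def)

lemma v3_eq[simp]: "v3 a b c = v3 a' b' c' \<longleftrightarrow> a = a' \<and> b = b' \<and> c = c'"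
  by (auto simp: vec_eq_iff forall_3)

lemma v3_expand: "x = v3 (x$1) (x$2) (x$3)"
  by (simp add: vec_eq_iff forall_3)

lemma v3_zero: "(0::V3) = v3 0 0 0"
  by (simp add: vec_eq_iff forall_3)

lemma v3_add[simp]: "v3 a b c + v3 a' b' c' = v3 (a+a') (b+b') (c+c')"
  by (simp add: vec_eq_iff forall_3)

lemma v3_scale[simp]: "k *s v3 a b c = v3 (k*a) (k*b) (k*c)"
  by (simp add: vec_eq_iff forall_3)

definition pt :: "V3 \<Rightarrow> V3 set" where "pt v = vec.span {v}"
definition ln :: "V3 \<Rightarrow> V3 \<Rightarrow> V3 set" where "ln u w = vec.span {u, w}"

lemma mem_pt: "x \<in> pt v \<longleftrightarrow> x = 0 \<or> x = v \<or> x = 2 *s v"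
proof -
  have "x \<in> pt v \<longleftrightarrow> (\<exists>k::F3. x = k *s v)" unfolding pt_def vec.span_singleton by auto
  also have "\<dots> \<longleftrightarrow> (\<exists>k\<in>{0,1,2::F3}. x = k *s v)" using UNIV_F3 by blast
  finally show ?thesis by simp
qed

lemma mem_ln: "x \<in> ln u w \<longleftrightarrow> (\<exists>a\<in>{0,1,2::F3}. \<exists>b\<in>{0,1,2::F3}. x = a *s u + b *s w)"
proof -
  have "x \<in> ln u w \<longleftrightarrow> (\<exists>a. \<exists>b::F3. x - a *s u = b *s w)"
    unfolding ln_def vec.span_breakdown_eq vec.span_singleton by auto
  also have "\<dots> \<longleftrightarrow> (\<exists>a::F3. \<exists>b::F3. x = a *s u + b *s w)"
    by (metis add_diff_cancel_left' diff_add_cancel add.commute)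
  also have "\<dots> \<longleftrightarrow> (\<exists>a\<in>{0,1,2::F3}. \<exists>b\<in>{0,1,2::F3}. x = a *s u + b *s w)" using UNIV_F3 by blast
  finally show ?thesis .
qed

lemma sub_eq:
  assumes "vec.subspace S" "vec.subspace T" "S \<subseteq> T" "vec.dim T \<le> vec.dim S"
  shows "T = S"
  using vec.dim_eq_span[OF assms(3,4)] assms(1,2) by (metis vec.span_eq_iff)

lemma pt_point: "v \<noteq> 0 \<Longrightarrow> pt v \<in> LG3_points"
proof -
  assume v: "v \<noteq> 0"
  have "vec.independent {v}" using v by (simp add: vec.independent_insert)
  hence "vec.dim (pt v) = 1" unfolding pt_def by (simp add: vec.dim_span_eq_card_independent)
  thus ?thesis unfolding LG3_points_def pt_def by simp
qed

lemma ln_line: "w \<noteq> 0 \<Longrightarrow> u \<notin> pt w \<Longrightarrow> ln u w \<in> LG3_lines"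
proof -
  assume w: "w \<noteq> 0" and u: "u \<notin> pt w"
  have uw: "u \<noteq> w" using u unfolding pt_def using vec.span_base by blast
  have "vec.independent {u, w}" using w u uw unfolding pt_def by (simp add: vec.independent_insert)
  hence "vec.dim (ln u w) = 2" unfolding ln_def using uw vec.dim_eq_card_independent[of "{u,w}"] by simp
  thus ?thesis unfolding LG3_lines_def ln_def by simp
qed

lemma pt_self: "v \<in> pt v" unfolding pt_def by (simp add: vec.span_base)

lemma pt_neq: "u \<notin> pt w \<Longrightarrow> pt u \<noteq> pt w" using pt_self by metis

lemma pt_sub_ln: "r \<in> ln a b \<Longrightarrow> pt r \<subseteq> ln a b"
  unfolding pt_def ln_def by (simp add: vec.span_minimal)

lemma ln_neq: "x \<in> ln c d \<Longrightarrow> x \<notin> ln a b \<Longrightarrow> ln a b \<noteq> ln c d" by auto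

lemma ln_gen: "a \<in> ln a b" "b \<in> ln a b" unfolding ln_def by (simp_all add: vec.span_base)

lemma points_lines_disj: "X \<in> LG3_points \<Longrightarrow> X \<notin> LG3_lines"
  unfolding LG3_points_def LG3_lines_def by auto

lemma unique_line:
  assumes P: "P \<in> LG3_points" and Q: "Q \<in> LG3_points" and PQ: "P \<noteq> Q"
    and L1: "L1 \<in> LG3_lines" and L2: "L2 \<in> LG3_lines"
    and "P \<subseteq> L1" "Q \<subseteq> L1" "P \<subseteq> L2" "Q \<subseteq> L2"
  shows "L1 = L2"
proof -
  let ?I = "L1 \<inter> L2"
  have sI: "vec.subspace ?I" using L1 L2 unfolding LG3_lines_def by (simp add: vec.subspace_inter)
  have sP: "vec.subspace P" "vec.dim P = 1" using P unfolding LG3_points_def by auto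
  have sQ: "vec.subspace Q" "vec.dim Q = 1" using Q unfolding LG3_points_def by auto
  have dI: "vec.dim ?I \<ge> 2"
  proof (rule ccontr)
    assume "\<not> vec.dim ?I \<ge> 2"
    hence "vec.dim ?I \<le> vec.dim P" using sP by simp
    hence "?I = P" using sub_eq[OF sP(1) sI] assms by auto
    hence "Q \<subseteq> P" using assms by auto
    hence "P = Q" using sub_eq[OF sQ(1) sP(1)] sP sQ by simp
    thus False using PQ by simp
  qed
  have "L1 = ?I" using sub_eq[OF sI, of L1] L1 dI unfolding LG3_lines_def by auto
  moreover have "L2 = ?I" using sub_eq[OF sI, of L2] L2 dI unfolding LG3_lines_def by auto
  ultimately show ?thesis by simp
qed

lemma unique_point:
  assumes P: "P \<in> LG3_points" and Q: "Q \<in> LG3_points"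
    and L1: "L1 \<in> LG3_lines" and L2: "L2 \<in> LG3_lines" and L12: "L1 \<noteq> L2"
    and "P \<subseteq> L1" "Q \<subseteq> L1" "P \<subseteq> L2" "Q \<subseteq> L2"
  shows "P = Q"
proof -
  let ?I = "L1 \<inter> L2"
  have sI: "vec.subspace ?I" using L1 L2 unfolding LG3_lines_def by (simp add: vec.subspace_inter)
  have sP: "vec.subspace P" "vec.dim P = 1" using P unfolding LG3_points_def by auto
  have sQ: "vec.subspace Q" "vec.dim Q = 1" using Q unfolding LG3_points_def by auto
  have dI: "vec.dim ?I \<le> 1"
  proof (rule ccontr)
    assume "\<not> vec.dim ?I \<le> 1"
    hence d: "vec.dim ?I \<ge> 2" by simp
    have "L1 = ?I" using sub_eq[OF sI, of L1] L1 d unfolding LG3_lines_def by auto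
    moreover have "L2 = ?I" using sub_eq[OF sI, of L2] L2 d unfolding LG3_lines_def by auto
    ultimately show False using L12 by simp
  qed
  have "?I = P" using sub_eq[OF sP(1) sI] assms dI sP by auto
  moreover have "?I = Q" using sub_eq[OF sQ(1) sI] assms dI sQ by auto
  ultimately show ?thesis by simp
qed

lemma pt_scale: "k \<noteq> 0 \<Longrightarrow> pt (k *s v) = pt v"
proof -
  assume k: "k \<noteq> 0"
  have "pt (k *s v) \<subseteq> pt v" unfolding pt_def
    by (simp add: vec.span_minimal vec.span_scale vec.span_base)
  moreover have "v = inverse k *s (k *s v)" using k by simp
  hence "pt v \<subseteq> pt (k *s v)" unfolding pt_def
    by (metis empty_subsetI insert_subset vec.span_base vec.span_minimal vec.span_scale
        vec.subspace_span singletonI)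
  ultimately show ?thesis by blast
qed

lemma pt_norm:
  "pt (v3 2 b c) = pt (v3 1 (2*b) (2*c))"
  "pt (v3 0 2 c) = pt (v3 0 1 (2*c))"
  "pt (v3 0 0 2) = pt (v3 0 0 1)"
proof -
  have "v3 2 b c = 2 *s v3 1 (2*b) (2*c)" by (simp add: mult.assoc[symmetric] F3_simps)
  thus "pt (v3 2 b c) = pt (v3 1 (2*b) (2*c))" by (metis pt_scale F3_neq(1))
  have "v3 0 2 c = 2 *s v3 0 1 (2*c)" by (simp add: mult.assoc[symmetric] F3_simps)
  thus "pt (v3 0 2 c) = pt (v3 0 1 (2*c))" by (metis pt_scale F3_neq(1))
  have "v3 0 0 2 = 2 *s v3 0 0 1" by (simp add: F3_simps)
  thus "pt (v3 0 0 2) = pt (v3 0 0 1)" by (metis pt_scale F3_neq(1))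
qed

lemma point_is_pt: assumes "X \<in> LG3_points" shows "\<exists>x. x \<noteq> 0 \<and> X = pt x"
proof -
  have sX: "vec.subspace X" and dX: "vec.dim X = 1" using assms unfolding LG3_points_def by auto
  obtain B where B: "B \<subseteq> X" "vec.independent B" "X \<subseteq> vec.span B" "card B = vec.dim X"
    by (rule vec.basis_exists)
  then obtain x where Bx: "B = {x}" using dX by (auto simp: card_1_singleton_iff)
  have "vec.span B \<subseteq> X" using B sX by (simp add: vec.span_minimal)
  hence "X = pt x" using B Bx unfolding pt_def by auto
  moreover have "x \<noteq> 0" using B Bx vec.dependent_zero by blast
  ultimately show ?thesis by blast
qed

lemma all_points:
  assumes "X \<in> LG3_points"
  shows "X \<in> {pt (v3 1 0 0), pt (v3 0 1 0), pt (v3 0 0 1), pt (v3 1 1 1),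
               pt (v3 1 1 0), pt (v3 1 0 1), pt (v3 0 1 1),
               pt (v3 1 2 0), pt (v3 1 0 2), pt (v3 0 1 2), pt (v3 1 1 2), pt (v3 1 2 1), pt (v3 1 2 2)}"
proof -
  obtain x where x: "x \<noteq> 0" "X = pt x" using point_is_pt[OF assms] by blast
  define a b c where "a = x$1" "b = x$2" "c = x$3"
  have xv: "x = v3 a b c" unfolding a_b_c_def by (rule v3_expand)
  have ha: "a = 0 \<or> a = 1 \<or> a = 2" and hb: "b = 0 \<or> b = 1 \<or> b = 2"
    and hc: "c = 0 \<or> c = 1 \<or> c = 2" using UNIV_F3 by blast+
  have nz: "v3 a b c \<noteq> v3 0 0 0" using x xv v3_zero by simp
  show ?thesis unfolding x(2) xv using ha hb hc nz
    by (elim disjE) (simp_all only: pt_norm F3_simps F3_22 mult_1_right mult_zero_right insert_iff simp_thms)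
qed

lemma test1: "v3 1 1 0 \<in> ln (v3 1 0 0) (v3 0 1 0)" "v3 0 0 1 \<notin> ln (v3 1 0 0) (v3 0 1 0)"
  by (simp_all add: mem_ln F3_simps)
lemmas dec = mem_ln mem_pt F3_simps F3_22 v3_zero

lemma line_two_points:
  assumes "L \<in> LG3_lines"
  shows "\<exists>P Q. P \<in> LG3_points \<and> Q \<in> LG3_points \<and> P \<noteq> Q \<and> P \<subseteq> L \<and> Q \<subseteq> L"
proof -
  have sL: "vec.subspace L" and dL: "vec.dim L = 2" using assms unfolding LG3_lines_def by auto
  obtain B where B: "B \<subseteq> L" "vec.independent B" "L \<subseteq> vec.span B" "card B = vec.dim L"
    by (rule vec.basis_exists)
  then obtain u w where Bx: "B = {u, w}" "u \<noteq> w" using dL by (auto simp: card_2_iff)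
  have u0: "u \<noteq> 0" and w0: "w \<noteq> 0" using B Bx vec.dependent_zero by blast+
  have "u \<notin> vec.span {w}" using B(2) Bx by (simp add: vec.independent_insert)
  hence "pt u \<noteq> pt w" using pt_self[of u] unfolding pt_def by blast
  moreover have "pt u \<subseteq> L" "pt w \<subseteq> L" unfolding pt_def using B Bx sL
    using vec.span_minimal[of "{u}" L] vec.span_minimal[of "{w}" L] by auto
  ultimately show ?thesis using pt_point u0 w0 by blast
qed

definition col :: "V3 set \<Rightarrow> nat" where
  "col X = (if X \<in> LG3_points then
      (if X = pt (v3 1 0 0) then 0 else if X = pt (v3 0 1 0) then 1 else
       if X = pt (v3 0 0 1) then 2 else if X = pt (v3 1 1 1) then 3 else 4)
    else (if \<not> pt (v3 1 0 0) \<subseteq> X then 0 else if \<not> pt (v3 0 1 0) \<subseteq> X then 1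
          else if \<not> pt (v3 0 0 1) \<subseteq> X then 2 else 3))"

lemma no3:
  assumes "L \<in> LG3_lines"
  shows "\<not> (pt (v3 1 0 0) \<subseteq> L \<and> pt (v3 0 1 0) \<subseteq> L \<and> pt (v3 0 0 1) \<subseteq> L)"
proof
  assume h: "pt (v3 1 0 0) \<subseteq> L \<and> pt (v3 0 1 0) \<subseteq> L \<and> pt (v3 0 0 1) \<subseteq> L"
  have sL: "vec.subspace L" and dL: "vec.dim L = 2" using assms unfolding LG3_lines_def by auto
  let ?S = "{v3 1 0 0, v3 0 1 0, v3 0 0 1}"
  have "?S \<subseteq> L" using h pt_self by blast
  hence "vec.dim ?S \<le> vec.dim L" by (rule vec.dim_subset)
  moreover have ind: "vec.independent ?S"
    by (simp add: vec.independent_insert dec[unfolded ln_def pt_def])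
  hence "vec.dim ?S = 3" by (simp add: vec.dim_eq_card_independent)
  ultimately show False using dL by simp
qed

lemma col_range: "col X < 5" unfolding col_def by auto

lemma col_proper: "proper_coloring LG3_vertices LG3_adj col"
  unfolding proper_coloring_def LG3_adj_def
  using no3 points_lines_disj by (auto simp: col_def)

lemma adj_pt: "P \<in> LG3_points \<Longrightarrow> LG3_adj P Y \<longleftrightarrow> Y \<in> LG3_lines \<and> P \<subseteq> Y"
  unfolding LG3_adj_def using points_lines_disj by blast

lemma adj_ln: "L \<in> LG3_lines \<Longrightarrow> LG3_adj Y L \<longleftrightarrow> Y \<in> LG3_points \<and> Y \<subseteq> L"
  unfolding LG3_adj_def using points_lines_disj by blast

context
  fixes \<sigma> :: "V3 set \<Rightarrow> V3 set"
  assumes aut: "graph_automorphism LG3_vertices LG3_adj \<sigma>"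
begin

lemma aut_in: "X \<in> LG3_vertices \<Longrightarrow> \<sigma> X \<in> LG3_vertices"
  using aut unfolding graph_automorphism_def bij_betw_def by blast

lemma aut_adj: "X \<in> LG3_vertices \<Longrightarrow> Y \<in> LG3_vertices \<Longrightarrow> LG3_adj X Y \<longleftrightarrow> LG3_adj (\<sigma> X) (\<sigma> Y)"
  using aut unfolding graph_automorphism_def by blast

lemma aut_pl:
  assumes "P \<in> LG3_points" "L \<in> LG3_lines" "P \<subseteq> L"
  shows "LG3_adj (\<sigma> P) (\<sigma> L)"
proof -
  have "LG3_adj P L" using assms adj_pt by blast
  thus ?thesis using aut_adj assms unfolding LG3_vertices_def by blast
qed

lemma line_fix:
  assumes P: "P \<in> LG3_points" and Q: "Q \<in> LG3_points" and "P \<noteq> Q" "\<sigma> P = P" "\<sigma> Q = Q"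
    and L: "L \<in> LG3_lines" and "P \<subseteq> L" "Q \<subseteq> L"
  shows "\<sigma> L = L"
proof -
  have "LG3_adj P (\<sigma> L)" "LG3_adj Q (\<sigma> L)" using aut_pl[OF P L] aut_pl[OF Q L] assms by auto
  hence "\<sigma> L \<in> LG3_lines" "P \<subseteq> \<sigma> L" "Q \<subseteq> \<sigma> L" using adj_pt P Q by auto
  thus ?thesis using unique_line[OF P Q] assms by blast
qed

lemma point_fix:
  assumes P: "P \<in> LG3_points" and L1: "L1 \<in> LG3_lines" and L2: "L2 \<in> LG3_lines"
    and "L1 \<noteq> L2" "\<sigma> L1 = L1" "\<sigma> L2 = L2" "P \<subseteq> L1" "P \<subseteq> L2"
  shows "\<sigma> P = P"
proof -
  have "LG3_adj (\<sigma> P) L1" "LG3_adj (\<sigma> P) L2" using aut_pl[OF P L1] aut_pl[OF P L2] assms by auto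
  hence "\<sigma> P \<in> LG3_points" "\<sigma> P \<subseteq> L1" "\<sigma> P \<subseteq> L2" using adj_ln L1 L2 by auto
  thus ?thesis using unique_point[OF _ P L1 L2] assms by blast
qed

lemma to_point:
  assumes P: "P \<in> LG3_points" and L: "L \<in> LG3_lines" "P \<subseteq> L"
    and E: "E \<in> LG3_points" "E \<subseteq> L" "\<sigma> E \<in> LG3_points"
  shows "\<sigma> P \<in> LG3_points"
proof -
  have "LG3_adj (\<sigma> E) (\<sigma> L)" using aut_pl E L by blast
  hence "\<sigma> L \<in> LG3_lines" using adj_pt E by blast
  moreover have "LG3_adj (\<sigma> P) (\<sigma> L)" using aut_pl P L by blast
  ultimately show ?thesis using adj_ln by blast
qed

lemma line_fix_pt:
  assumes "\<sigma> (pt u) = pt u" "\<sigma> (pt w) = pt w" "u \<noteq> 0" "w \<noteq> 0" "u \<notin> pt w"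
  shows "\<sigma> (ln u w) = ln u w"
  using line_fix[OF pt_point pt_point pt_neq _ _ ln_line pt_sub_ln pt_sub_ln] assms ln_gen
  by blast

lemma point_fix_pt:
  assumes "\<sigma> (ln a b) = ln a b" "\<sigma> (ln c d) = ln c d" "b \<noteq> 0" "a \<notin> pt b" "d \<noteq> 0" "c \<notin> pt d"
    "r \<noteq> 0" "r \<in> ln a b" "r \<in> ln c d" "c \<notin> ln a b \<or> d \<notin> ln a b"
  shows "\<sigma> (pt r) = pt r"
proof -
  have "ln a b \<noteq> ln c d" using assms(10) ln_gen by auto
  thus ?thesis using point_fix[OF pt_point ln_line ln_line _ _ _ pt_sub_ln pt_sub_ln] assms by blast
qed

end

lemma col_pt_cases:
  "Y \<in> LG3_points \<Longrightarrow> col Y = 0 \<Longrightarrow> Y = pt (v3 1 0 0)"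
  "Y \<in> LG3_points \<Longrightarrow> col Y = 1 \<Longrightarrow> Y = pt (v3 0 1 0)"
  "Y \<in> LG3_points \<Longrightarrow> col Y = 2 \<Longrightarrow> Y = pt (v3 0 0 1)"
  "Y \<in> LG3_points \<Longrightarrow> col Y = 3 \<Longrightarrow> Y = pt (v3 1 1 1)"
  "Y \<in> LG3_vertices \<Longrightarrow> col Y = 4 \<Longrightarrow> Y \<in> LG3_points"
  unfolding col_def LG3_vertices_def by (auto split: if_splits)

lemma nz[simp]: "v3 a b c \<noteq> 0 \<longleftrightarrow> \<not> (a = 0 \<and> b = 0 \<and> c = 0)"
  by (simp add: v3_zero)

theorem mainTheorem16:
  shows "distinguishing_chromatic_number LG3_vertices LG3_adj \<le> 5"
proof -
  have dist: "distinguishing_coloring LG3_vertices LG3_adj col"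
    unfolding distinguishing_coloring_def
  proof (intro allI impI)
    fix \<sigma> assume h: "graph_automorphism LG3_vertices LG3_adj \<sigma> \<and> (\<forall>v\<in>LG3_vertices. col (\<sigma> v) = col v)"
    hence aut: "graph_automorphism LG3_vertices LG3_adj \<sigma>"
      and cp: "\<And>v. v \<in> LG3_vertices \<Longrightarrow> col (\<sigma> v) = col v" by auto
    have ptV: "pt v \<in> LG3_vertices" if "v \<noteq> 0" for v
      using pt_point[OF that] unfolding LG3_vertices_def by blast
    have ptP: "pt v \<in> LG3_points" if "v \<noteq> 0" for v using pt_point[OF that] .
    let ?A = "pt (v3 1 0 0)" and ?B = "pt (v3 0 1 0)" and ?C = "pt (v3 0 0 1)" and ?D = "pt (v3 1 1 1)"
    let ?e = "pt (v3 1 1 0)"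
    have colA: "col ?A = 0" unfolding col_def using ptP[of "v3 1 0 0"] by simp
    have colB: "col ?B = 1" unfolding col_def using ptP[of "v3 0 1 0"] pt_neq[of "v3 0 1 0" "v3 1 0 0"]
      by (simp add: dec)
    have colC: "col ?C = 2" unfolding col_def using ptP[of "v3 0 0 1"]
       pt_neq[of "v3 0 0 1" "v3 1 0 0"] pt_neq[of "v3 0 0 1" "v3 0 1 0"]
      by (simp add: dec)
    have colD: "col ?D = 3" unfolding col_def using ptP[of "v3 1 1 1"]
       pt_neq[of "v3 1 1 1" "v3 1 0 0"] pt_neq[of "v3 1 1 1" "v3 0 1 0"] pt_neq[of "v3 1 1 1" "v3 0 0 1"]
      by (simp add: dec)
    have cole: "col ?e = 4" unfolding col_def using ptP[of "v3 1 1 0"]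
       pt_neq[of "v3 1 1 0" "v3 1 0 0"] pt_neq[of "v3 1 1 0" "v3 0 1 0"] pt_neq[of "v3 1 1 0" "v3 0 0 1"]
       pt_neq[of "v3 1 1 0" "v3 1 1 1"]
      by (simp add: dec)
    have se: "\<sigma> ?e \<in> LG3_points"
      using col_pt_cases(5)[OF aut_in[OF aut ptV]] cp[OF ptV] cole by simp
    have AB: "ln (v3 1 0 0) (v3 0 1 0) \<in> LG3_lines" by (rule ln_line) (simp_all add: dec)
    have CD: "ln (v3 0 0 1) (v3 1 1 1) \<in> LG3_lines" by (rule ln_line) (simp_all add: dec)
    have eAB: "?e \<subseteq> ln (v3 1 0 0) (v3 0 1 0)" by (rule pt_sub_ln) (simp add: dec)
    have eCD: "?e \<subseteq> ln (v3 0 0 1) (v3 1 1 1)" by (rule pt_sub_ln) (simp add: dec)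
    have fA: "\<sigma> ?A = ?A"
      using col_pt_cases(1)[OF to_point[OF aut ptP AB pt_sub_ln[OF ln_gen(1)] ptP eAB se]]
        cp[OF ptV] colA by simp
    have fB: "\<sigma> ?B = ?B"
      using col_pt_cases(2)[OF to_point[OF aut ptP AB pt_sub_ln[OF ln_gen(2)] ptP eAB se]]
        cp[OF ptV] colB by simp
    have fC: "\<sigma> ?C = ?C"
      using col_pt_cases(3)[OF to_point[OF aut ptP CD pt_sub_ln[OF ln_gen(1)] ptP eCD se]]
        cp[OF ptV] colC by simp
    have fD: "\<sigma> ?D = ?D"
      using col_pt_cases(4)[OF to_point[OF aut ptP CD pt_sub_ln[OF ln_gen(2)] ptP eCD se]]
        cp[OF ptV] colD by simp
    note LF = line_fix_pt[OF aut] and PF = point_fix_pt[OF aut]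
    have lAB: "\<sigma> (ln (v3 1 0 0) (v3 0 1 0)) = ln (v3 1 0 0) (v3 0 1 0)" by (rule LF) (simp_all add: fA fB dec)
    have lCD: "\<sigma> (ln (v3 0 0 1) (v3 1 1 1)) = ln (v3 0 0 1) (v3 1 1 1)" by (rule LF) (simp_all add: fC fD dec)
    have lAC: "\<sigma> (ln (v3 1 0 0) (v3 0 0 1)) = ln (v3 1 0 0) (v3 0 0 1)" by (rule LF) (simp_all add: fA fC dec)
    have lBD: "\<sigma> (ln (v3 0 1 0) (v3 1 1 1)) = ln (v3 0 1 0) (v3 1 1 1)" by (rule LF) (simp_all add: fB fD dec)
    have lAD: "\<sigma> (ln (v3 1 0 0) (v3 1 1 1)) = ln (v3 1 0 0) (v3 1 1 1)" by (rule LF) (simp_all add: fA fD dec)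
    have lBC: "\<sigma> (ln (v3 0 1 0) (v3 0 0 1)) = ln (v3 0 1 0) (v3 0 0 1)" by (rule LF) (simp_all add: fB fC dec)
    have d1: "\<sigma> (pt (v3 1 1 0)) = pt (v3 1 1 0)" by (rule PF[OF lAB lCD]) (simp_all add: dec)
    have d2: "\<sigma> (pt (v3 1 0 1)) = pt (v3 1 0 1)" by (rule PF[OF lAC lBD]) (simp_all add: dec)
    have d3: "\<sigma> (pt (v3 0 1 1)) = pt (v3 0 1 1)" by (rule PF[OF lAD lBC]) (simp_all add: dec)
    have l1: "\<sigma> (ln (v3 1 0 1) (v3 0 1 1)) = ln (v3 1 0 1) (v3 0 1 1)" by (rule LF) (simp_all add: d2 d3 dec)
    have l2: "\<sigma> (ln (v3 1 1 0) (v3 0 1 1)) = ln (v3 1 1 0) (v3 0 1 1)" by (rule LF) (simp_all add: d1 d3 dec)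
    have l3: "\<sigma> (ln (v3 1 1 0) (v3 1 0 1)) = ln (v3 1 1 0) (v3 1 0 1)" by (rule LF) (simp_all add: d1 d2 dec)
    have q1: "\<sigma> (pt (v3 1 2 0)) = pt (v3 1 2 0)" by (rule PF[OF lAB l1]) (simp_all add: dec)
    have q2: "\<sigma> (pt (v3 1 0 2)) = pt (v3 1 0 2)" by (rule PF[OF lAC l2]) (simp_all add: dec)
    have q3: "\<sigma> (pt (v3 0 1 2)) = pt (v3 0 1 2)" by (rule PF[OF lBC l3]) (simp_all add: dec)
    have l4: "\<sigma> (ln (v3 0 1 0) (v3 1 0 2)) = ln (v3 0 1 0) (v3 1 0 2)" by (rule LF) (simp_all add: fB q2 dec)
    have l5: "\<sigma> (ln (v3 1 0 0) (v3 0 1 2)) = ln (v3 1 0 0) (v3 0 1 2)" by (rule LF) (simp_all add: fA q3 dec)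
    have l6: "\<sigma> (ln (v3 0 0 1) (v3 1 2 0)) = ln (v3 0 0 1) (v3 1 2 0)" by (rule LF) (simp_all add: fC q1 dec)
    have q4: "\<sigma> (pt (v3 1 1 2)) = pt (v3 1 1 2)" by (rule PF[OF lCD l4]) (simp_all add: dec)
    have q5: "\<sigma> (pt (v3 1 2 1)) = pt (v3 1 2 1)" by (rule PF[OF lBD l5]) (simp_all add: dec)
    have q6: "\<sigma> (pt (v3 1 2 2)) = pt (v3 1 2 2)" by (rule PF[OF lAD l6]) (simp_all add: dec)
    have allP: "\<sigma> P = P" if "P \<in> LG3_points" for P
      using all_points[OF that] fA fB fC fD d1 d2 d3 q1 q2 q3 q4 q5 q6 by auto
    show "\<forall>v\<in>LG3_vertices. \<sigma> v = v"
    proof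
      fix v assume "v \<in> LG3_vertices"
      hence "v \<in> LG3_points \<or> v \<in> LG3_lines" unfolding LG3_vertices_def by blast
      thus "\<sigma> v = v"
      proof
        assume "v \<in> LG3_points" thus ?thesis by (rule allP)
      next
        assume L: "v \<in> LG3_lines"
        then obtain P Q where "P \<in> LG3_points" "Q \<in> LG3_points" "P \<noteq> Q" "P \<subseteq> v" "Q \<subseteq> v"
          using line_two_points by blast
        thus ?thesis using line_fix[OF aut] allP L by blast
      qed
    qed
  qed
  have "\<exists>c. c ` LG3_vertices \<subseteq> {..<5} \<and> proper_coloring LG3_vertices LG3_adj c
            \<and> distinguishing_coloring LG3_vertices LG3_adj c"
    using dist col_proper col_range by (intro exI[of _ col]) auto
  thus ?thesis unfolding distinguishing_chromatic_number_def by (rule Least_le)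
qed

end
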